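(* Assume $V$ satisfies Assumptions A1 and A2, let $\delta$ satisfy the step-size condition (S), and let $c=(1-\gamma\delta/2)/(1-\gamma\delta)$. For the underdamped Langevin algorithm with step size $\delta$, let $\tau_k=(1-\gamma\delta)\rho_k-\delta\nabla V(\xi_k)$. Then there exist constants $\varepsilon=\varepsilon(\delta)>0$ and $C_1=C_1(\delta)>0$ such that for all $k\ge0$ (almost surely), \[ \Gamma_c(\xi_{k+1},\tau_k)\le(1-\varepsilon\gamma\delta)\,\Gamma_c(\xi_k,\rho_k)+C_1 . \]
   Context: Fix integers $r\ge1$ and a constant $\gamma>0$. A map has polynomial growth if $\Vert\phi(x)\Vert\le C(1+\Vert x\Vert^m)$ for some $C>0$, integer $m\ge0$ and all $x$; $\mathscr{C}^\infty_{poly}$ denotes infinitely differentiable maps with the map and all derivatives of polynomial growth. Norms of matrices are operator norms. Assumption A1: (a) $V(x)\ge0$ for all $x\in\mathbb{R}^r$; (b) $\Vert\nabla^2V(x)\Vert\le\nu$ for some constant $\nu>0$ and all $x$; (c) $V\in\mathscr{C}^\infty_{poly}$. Assumption A2: there exist constants $\alpha>0$ and $0<\beta<1$ such that for all $x\in\mathbb{R}^r$, $\frac12\langle\nabla V(x),x\rangle\ge\beta V(x)+\gamma^2C_\beta\Vert x\Vert^2-\alpha$, where $C_\beta=\frac{\beta(2-\beta)}{8(1-\beta)}$. Step-size condition (S): $0<\delta\le\min\{1/\gamma,\ \gamma/(2\nu),\ (D+1-\sqrt{D^2+1})/\gamma\}$ with $D=\gamma^4C_\beta/\nu^2$. Underdamped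 Langevin algorithm: $\xi_{k+1}=\xi_k+\delta\rho_k$, $\rho_{k+1}=(1-\gamma\delta)\rho_k-\delta\nabla V(\xi_k)+\sqrt{2\gamma\delta}\,\eta_k$, where $\eta_0,\eta_1,\dots$ are i.i.d. $N(0,I_r)$ and $\eta_k$ is independent of $(\xi_j,\rho_j)_{j\le k}$; the initial values $\xi_0,\rho_0$ are deterministic. For $c>1$ and $x,y\in\mathbb{R}^r$, $\Gamma_c(x,y)=\frac{\gamma^2}{4}\Vert x\Vert^2+V(x)+\frac{\gamma}{2}\langle x,y\rangle+\frac c2\Vert y\Vert^2+1$. *)

theory Defs
  imports "HOL-Analysis.Analysis"
begin

definition poly_growth :: "('a::real_normed_vector \<Rightarrow> real) \<Rightarrow> bool" where
  "poly_growth f \<longleftrightarrow> (\<exists>C>0. \<exists>m::nat. \<forall>x. \<bar>f x\<bar> \<le> C * (1 + norm x ^ m))"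

text \<open>C-infinity-poly: all mixed partial derivatives of all orders exist
  (as Frechet derivatives; D (j # is) is the partial derivative in direction j
  of D is) and all of them, including the map itself, have polynomial growth.\<close>
definition smooth_poly :: "(real^'n \<Rightarrow> real) \<Rightarrow> bool" where
  "smooth_poly V \<longleftrightarrow> (\<exists>D :: 'n list \<Rightarrow> real^'n \<Rightarrow> real.
      D [] = V \<and>
      (\<forall>is x. (D is has_derivative (\<lambda>h. \<Sum>j\<in>UNIV. D (j # is) x * h $ j)) (at x)) \<and>
      (\<forall>is. poly_growth (D is)))"

definition C_beta :: "real \<Rightarrow> real" where
  "C_beta \<beta> = \<beta> * (2 - \<beta>) / (8 * (1 - \<beta>))"

definition Gamma_c :: "real \<Rightarrow> (real^'n \<Rightarrow> real) \<Rightarrow> real \<Rightarrow> real^'n \<Rightarrow> real^'n \<Rightarrow> real" where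
  "Gamma_c \<gamma> V c x y = \<gamma>\<^sup>2 / 4 * (norm x)\<^sup>2 + V x + \<gamma> / 2 * (x \<bullet> y) + c / 2 * (norm y)\<^sup>2 + 1"

text \<open>Underdamped Langevin algorithm, for a given realisation eta of the noise.\<close>
primrec ula :: "real \<Rightarrow> real \<Rightarrow> (real^'n \<Rightarrow> real^'n) \<Rightarrow> real^'n \<Rightarrow> real^'n
                 \<Rightarrow> (nat \<Rightarrow> real^'n) \<Rightarrow> nat \<Rightarrow> (real^'n) \<times> (real^'n)" where
  "ula \<gamma> \<delta> gradV \<xi>0 \<rho>0 \<eta> 0 = (\<xi>0, \<rho>0)"
| "ula \<gamma> \<delta> gradV \<xi>0 \<rho>0 \<eta> (Suc k) =
     (let (\<xi>, \<rho>) = ula \<gamma> \<delta> gradV \<xi>0 \<rho>0 \<eta> k in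
       (\<xi> + \<delta> *\<^sub>R \<rho>,
        (1 - \<gamma> * \<delta>) *\<^sub>R \<rho> - \<delta> *\<^sub>R gradV \<xi> + sqrt (2 * \<gamma> * \<delta>) *\<^sub>R \<eta> k))"

end

theory Submission
  imports Defs
begin

lemma lip_grad:
  fixes gradV :: "real^'n \<Rightarrow> real^'n" and H :: "real^'n \<Rightarrow> real^'n^'n"
  assumes hess: "\<And>x. (gradV has_derivative (\<lambda>h. H x *v h)) (at x)"
    and A1b: "\<And>x. onorm (\<lambda>h. H x *v h) \<le> \<nu>"
  shows "norm (gradV x - gradV y) \<le> \<nu> * norm (x - y)"
  by (rule differentiable_bound[where S=UNIV and f'="\<lambda>x h. H x *v h"])
     (auto simp: hess A1b)

lemma sq_bound: "(u + v)\<^sup>2 \<le> 3*u\<^sup>2 + 3/2*(v::real)\<^sup>2"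
proof -
  have "0 \<le> (2*u - v)\<^sup>2" by simp
  thus ?thesis by (simp add: power2_diff power2_sum power_mult_distrib)
qed

lemma descent:
  fixes V :: "real^'n \<Rightarrow> real" and gradV :: "real^'n \<Rightarrow> real^'n"
  assumes grad: "\<And>x. (V has_derivative (\<lambda>h. gradV x \<bullet> h)) (at x)"
    and lip: "\<And>x y. norm (gradV x - gradV y) \<le> \<nu> * norm (x - y)"
  shows "V (x + h) \<le> V x + gradV x \<bullet> h + \<nu>/2 * (norm h)\<^sup>2"
proof -
  define f where "f t = V (x + t *\<^sub>R h) - t * (gradV x \<bullet> h) - \<nu>/2 * t\<^sup>2 * (norm h)\<^sup>2" for t::real
  have d1: "((\<lambda>t. V (x + t *\<^sub>R h)) has_derivative (\<lambda>u. gradV (x + t *\<^sub>R h) \<bullet> (u *\<^sub>R h))) (at t within {0..1})" for t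
  proof -
    have "((\<lambda>t. x + t *\<^sub>R h) has_derivative (\<lambda>u. u *\<^sub>R h)) (at t within {0..1})"
      by (auto intro!: derivative_eq_intros)
    from has_derivative_compose[OF this grad] show ?thesis by simp
  qed
  have d: "(f has_derivative (\<lambda>u. u * (gradV (x + t *\<^sub>R h) \<bullet> h - gradV x \<bullet> h - \<nu> * t * (norm h)\<^sup>2))) (at t within {0..1})" for t
    unfolding f_def
    by (rule has_derivative_eq_rhs, (rule derivative_intros d1)+) (auto simp: algebra_simps fun_eq_iff power2_eq_square)
  obtain t where t: "t \<in> {0..1}" and eq: "f 1 - f 0 = 1 * (gradV (x + t *\<^sub>R h) \<bullet> h - gradV x \<bullet> h - \<nu> * t * (norm h)\<^sup>2)"
    using mvt_very_simple[of 0 1 f, OF _ d] by auto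
  have "gradV (x + t *\<^sub>R h) \<bullet> h - gradV x \<bullet> h = (gradV (x + t *\<^sub>R h) - gradV x) \<bullet> h"
    by (simp add: inner_diff_left)
  also have "\<dots> \<le> norm (gradV (x + t *\<^sub>R h) - gradV x) * norm h" by (rule norm_cauchy_schwarz)
  also have "\<dots> \<le> \<nu> * norm (t *\<^sub>R h) * norm h"
    using lip[of "x + t *\<^sub>R h" x] by (intro mult_right_mono) auto
  also have "\<dots> = \<nu> * t * (norm h)\<^sup>2" using t by (simp add: power2_eq_square)
  finally have "f 1 - f 0 \<le> 0" using eq by simp
  thus ?thesis unfolding f_def by simp
qed

theorem lemma1:
  fixes V :: "real^'n \<Rightarrow> real"
    and gradV :: "real^'n \<Rightarrow> real^'n"
    and H :: "real^'n \<Rightarrow> real^'n^'n"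
    and \<gamma> \<nu> \<alpha> \<beta> \<delta> :: real
  assumes gamma_pos: "\<gamma> > 0"
    and grad: "\<And>x. (V has_derivative (\<lambda>h. gradV x \<bullet> h)) (at x)"
    and hess: "\<And>x. (gradV has_derivative (\<lambda>h. H x *v h)) (at x)"
    and A1a: "\<And>x. V x \<ge> 0"
    and nu_pos: "\<nu> > 0"
    and A1b: "\<And>x. onorm (\<lambda>h. H x *v h) \<le> \<nu>"
    and A1c: "smooth_poly V"
    and alpha_pos: "\<alpha> > 0" and beta: "0 < \<beta>" "\<beta> < 1"
    and A2: "\<And>x. 1/2 * (gradV x \<bullet> x) \<ge> \<beta> * V x + \<gamma>\<^sup>2 * C_beta \<beta> * (norm x)\<^sup>2 - \<alpha>"
    and S: "0 < \<delta>" "\<delta> \<le> 1 / \<gamma>" "\<delta> \<le> \<gamma> / (2 * \<nu>)"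
      "\<delta> \<le> (\<gamma>^4 * C_beta \<beta> / \<nu>\<^sup>2 + 1 - sqrt ((\<gamma>^4 * C_beta \<beta> / \<nu>\<^sup>2)\<^sup>2 + 1)) / \<gamma>"
  shows "\<exists>\<epsilon>>0. \<exists>C1>0. \<forall>\<xi>0 \<rho>0 (\<eta> :: nat \<Rightarrow> real^'n) k.
           let c = (1 - \<gamma> * \<delta> / 2) / (1 - \<gamma> * \<delta>);
               (\<xi>, \<rho>) = ula \<gamma> \<delta> gradV \<xi>0 \<rho>0 \<eta> k;
               \<tau> = (1 - \<gamma> * \<delta>) *\<^sub>R \<rho> - \<delta> *\<^sub>R gradV \<xi>;
               \<xi>' = fst (ula \<gamma> \<delta> gradV \<xi>0 \<rho>0 \<eta> (Suc k))
           in Gamma_c \<gamma> V c \<xi>' \<tau> \<le> (1 - \<epsilon> * \<gamma> * \<delta>) * Gamma_c \<gamma> V c \<xi> \<rho> + C1"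
proof -
  define a where "a = \<gamma> * \<delta>"
  define c where "c = (1 - \<gamma> * \<delta> / 2) / (1 - \<gamma> * \<delta>)"
  define Cb where "Cb = C_beta \<beta>"
  define D where "D = \<gamma>^4 * Cb / \<nu>\<^sup>2"
  define G where "G = (norm (gradV 0))\<^sup>2"
  have a_pos: "a > 0" using gamma_pos S unfolding a_def by simp
  have Cb_pos: "Cb > 0" using beta unfolding Cb_def C_beta_def by (auto intro!: divide_pos_pos)
  have D_pos: "D > 0" using gamma_pos nu_pos Cb_pos unfolding D_def by simp
  have aD: "a \<le> D + 1 - sqrt (D\<^sup>2 + 1)"
  proof -
    have "\<delta> * \<gamma> \<le> D + 1 - sqrt (D\<^sup>2 + 1)"
      using S(4) gamma_pos unfolding D_def Cb_def by (simp add: pos_le_divide_eq)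
    thus ?thesis unfolding a_def by (simp add: mult.commute)
  qed
  have sq_gt: "sqrt (D\<^sup>2 + 1) > D"
    using D_pos by (metis abs_of_pos less_add_one real_sqrt_abs real_sqrt_less_mono)
  have a_lt1: "a < 1" using aD sq_gt by linarith
  have hc: "c * (1 - a) = 1 - a / 2" using a_lt1 unfolding c_def a_def by simp
  have c_ge1: "c \<ge> 1" using a_lt1 a_pos unfolding c_def a_def[symmetric] by (simp add: field_simps)
  have Dac: "D \<ge> a * c"
  proof -
    have s0: "0 \<le> sqrt (D\<^sup>2 + 1)" by simp
    have "sqrt (D\<^sup>2 + 1) \<le> D + 1 - a" using aD by linarith
    hence "(sqrt (D\<^sup>2 + 1))\<^sup>2 \<le> (D + 1 - a)\<^sup>2" using s0 by (intro power_mono) auto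
    hence "D\<^sup>2 + 1 \<le> (D + 1 - a)\<^sup>2" by simp
    hence "2 * D * (1 - a) \<ge> a * (2 - a)" by (simp add: power2_eq_square algebra_simps)
    moreover have "a * (c * (1 - a)) = a * (1 - a / 2)" by (simp add: hc)
    ultimately have "D * (1 - a) \<ge> a * c * (1 - a)" by (simp add: algebra_simps)
    thus ?thesis using a_lt1 by simp
  qed
  have key1: "c * \<delta>\<^sup>2 * \<nu>\<^sup>2 \<le> a * \<gamma>\<^sup>2 * Cb"
  proof -
    have "\<gamma>*\<delta>*c \<le> \<gamma>^4 * Cb / \<nu>\<^sup>2" using Dac unfolding D_def a_def by (simp add: mult.commute)
    hence "\<gamma>*\<delta>*c*\<nu>\<^sup>2 \<le> \<gamma>^4 * Cb" using nu_pos by (simp add: pos_le_divide_eq)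
    hence "\<delta>*(\<gamma>*\<delta>*c*\<nu>\<^sup>2) \<le> \<delta>*(\<gamma>^4 * Cb)" using S(1) by (intro mult_left_mono) auto
    hence "\<gamma>*(c * \<delta>\<^sup>2 * \<nu>\<^sup>2) \<le> \<gamma>*(a * \<gamma>\<^sup>2 * Cb)" unfolding a_def by (simp add: power2_eq_square power4_eq_xxxx algebra_simps)
    thus ?thesis using gamma_pos by simp
  qed
  have key2: "\<nu> * \<delta>\<^sup>2 \<le> a / 2"
  proof -
    have "2 * \<nu> * \<delta> \<le> \<gamma>" using S(3) nu_pos by (simp add: le_divide_eq algebra_simps)
    hence "\<delta> * (2 * \<nu> * \<delta>) \<le> \<delta> * \<gamma>" using S(1) by (intro mult_left_mono) auto
    thus ?thesis unfolding a_def by (simp add: power2_eq_square algebra_simps)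
  qed
  define \<epsilon> where "\<epsilon> = min \<beta> (min (Cb/2) (1/(2*c+1)))"
  define C1 where "C1 = 1 + a + a * \<alpha> + 3 * c * \<delta>\<^sup>2 * G / 2"
  have eps_pos: "\<epsilon> > 0" using beta Cb_pos c_ge1 unfolding \<epsilon>_def by simp
  have G_nn: "G \<ge> 0" unfolding G_def by simp
  have C1_pos: "C1 > 0" unfolding C1_def using a_pos alpha_pos G_nn c_ge1 by (simp add: add_pos_nonneg)
  have lip: "\<And>x y. norm (gradV x - gradV y) \<le> \<nu> * norm (x - y)"
    by (rule lip_grad[OF hess A1b])
  have core: "Gamma_c \<gamma> V c (x + \<delta> *\<^sub>R p) ((1 - \<gamma> * \<delta>) *\<^sub>R p - \<delta> *\<^sub>R gradV x)
      \<le> (1 - \<epsilon> * \<gamma> * \<delta>) * Gamma_c \<gamma> V c x p + C1" for x p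
  proof -
    define g where "g = gradV x"
    define X where "X = (norm x)\<^sup>2"
    define P where "P = (norm p)\<^sup>2"
    define Q where "Q = x \<bullet> p"
    define R where "R = x \<bullet> g"
    define Sg where "Sg = p \<bullet> g"
    define T where "T = (norm g)\<^sup>2"
    define W where "W = V x"
    define W' where "W' = V (x + \<delta> *\<^sub>R p)"
    have e1: "(norm (x + \<delta> *\<^sub>R p))\<^sup>2 = X + 2*\<delta>*Q + \<delta>\<^sup>2*P"
      unfolding X_def P_def Q_def
      unfolding power2_norm_eq_inner by (simp add: inner_add_left inner_add_right inner_commute algebra_simps power2_eq_square)
    have e2: "(x + \<delta> *\<^sub>R p) \<bullet> ((1 - \<gamma> * \<delta>) *\<^sub>R p - \<delta> *\<^sub>R gradV x) = (1-a)*Q - \<delta>*R + \<delta>*(1-a)*P - \<delta>\<^sup>2*Sg"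
      unfolding a_def P_def Q_def R_def Sg_def g_def
      unfolding power2_norm_eq_inner by (simp add: inner_add_left inner_add_right inner_diff_left inner_diff_right inner_commute algebra_simps power2_eq_square)
    have e3: "(norm ((1 - \<gamma> * \<delta>) *\<^sub>R p - \<delta> *\<^sub>R gradV x))\<^sup>2 = (1-a)\<^sup>2*P - 2*\<delta>*(1-a)*Sg + \<delta>\<^sup>2*T"
      unfolding a_def P_def T_def Sg_def g_def
      unfolding power2_norm_eq_inner by (simp add: inner_add_left inner_add_right inner_diff_left inner_diff_right inner_commute algebra_simps power2_eq_square)
    have desc: "W' \<le> W + \<delta> * Sg + \<nu>/2 * \<delta>\<^sup>2 * P"
      using descent[OF grad lip, of x "\<delta> *\<^sub>R p"] unfolding W'_def W_def Sg_def P_def g_def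
      by (simp add: inner_commute power_mult_distrib)
    have A2': "R/2 \<ge> \<beta> * W + \<gamma>\<^sup>2 * Cb * X - \<alpha>"
      using A2[of x] unfolding R_def g_def W_def Cb_def X_def by (simp add: inner_commute)
    have Tb: "T \<le> 3*G + 3/2 * \<nu>\<^sup>2 * X"
    proof -
      have "norm g \<le> norm (gradV 0) + \<nu> * norm x"
        using lip[of x 0] norm_triangle_ineq2[of g "gradV 0"] unfolding g_def by simp
      hence "(norm g)\<^sup>2 \<le> (norm (gradV 0) + \<nu> * norm x)\<^sup>2" by (intro power_mono) auto
      also have "\<dots> \<le> 3 * (norm (gradV 0))\<^sup>2 + 3/2 * (\<nu> * norm x)\<^sup>2"
        by (rule sq_bound)
      finally show ?thesis unfolding T_def G_def X_def by (simp add: power_mult_distrib)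
    qed
    have CS: "2*\<gamma>*Q \<le> \<gamma>\<^sup>2*X + P"
    proof -
      have "Q \<le> norm x * norm p" unfolding Q_def by (rule norm_cauchy_schwarz)
      hence "2*\<gamma>*Q \<le> 2*\<gamma>*(norm x * norm p)" using gamma_pos by simp
      also have "\<dots> \<le> \<gamma>\<^sup>2*X + P" unfolding X_def P_def
        using zero_le_power2[of "\<gamma> * norm x - norm p"] by (simp add: power2_diff power_mult_distrib algebra_simps)
      finally show ?thesis .
    qed
    define B where "B = \<gamma>\<^sup>2/4*X + W + \<gamma>/2*Q + (1/2 - a/4 + \<nu>*\<delta>\<^sup>2/2)*P + 1 - a*\<beta>*W - a*\<gamma>\<^sup>2*Cb*X + a*\<alpha> + c*\<delta>\<^sup>2/2*(3*G + 3/2*\<nu>\<^sup>2*X)"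
    define E1 where "E1 = W' - W - \<delta>*Sg - \<nu>/2*\<delta>\<^sup>2*P"
    define E2 where "E2 = (c*\<delta>\<^sup>2/2) * (T - 3*G - 3/2*\<nu>\<^sup>2*X)"
    define E3 where "E3 = a * (R/2 - \<beta>*W - \<gamma>\<^sup>2*Cb*X + \<alpha>)"
    have GL: "Gamma_c \<gamma> V c (x + \<delta> *\<^sub>R p) ((1 - \<gamma> * \<delta>) *\<^sub>R p - \<delta> *\<^sub>R gradV x)
       = \<gamma>\<^sup>2/4*(X + 2*\<delta>*Q + \<delta>\<^sup>2*P) + W' + \<gamma>/2*((1-a)*Q - \<delta>*R + \<delta>*(1-a)*P - \<delta>\<^sup>2*Sg) + c/2*((1-a)\<^sup>2*P - 2*\<delta>*(1-a)*Sg + \<delta>\<^sup>2*T) + 1"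
      unfolding Gamma_c_def e1 e2 e3 W'_def by simp
    have id1: "\<gamma>\<^sup>2/4*(X + 2*\<delta>*Q + \<delta>\<^sup>2*P) + W' + \<gamma>/2*((1-a)*Q - \<delta>*R + \<delta>*(1-a)*P - \<delta>\<^sup>2*Sg) + c/2*((1-a)\<^sup>2*P - 2*\<delta>*(1-a)*Sg + \<delta>\<^sup>2*T) + 1 - B = E1 + E2 - E3"
    proof -
      have h1: "c/2*((1-a)\<^sup>2*P - 2*\<delta>*(1-a)*Sg + \<delta>\<^sup>2*T) = (1-a/2)*(1-a)/2*P - \<delta>*(1-a/2)*Sg + c*\<delta>\<^sup>2/2*T"
      proof -
        have "c/2*((1-a)\<^sup>2*P - 2*\<delta>*(1-a)*Sg + \<delta>\<^sup>2*T) = (c*(1-a))*(1-a)/2*P - \<delta>*(c*(1-a))*Sg + c*\<delta>\<^sup>2/2*T"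
          by (simp add: power2_eq_square field_simps)
        thus ?thesis by (simp only: hc)
      qed
      show ?thesis unfolding h1 unfolding B_def E1_def E2_def E3_def a_def by (simp add: field_simps power2_eq_square)
    qed
    have "E1 \<le> 0" unfolding E1_def using desc by simp
    moreover have "E2 \<le> 0" unfolding E2_def using Tb c_ge1
      by (intro mult_nonneg_nonpos) auto
    moreover have "E3 \<ge> 0" unfolding E3_def using A2' a_pos by simp
    ultimately have LB: "Gamma_c \<gamma> V c (x + \<delta> *\<^sub>R p) ((1 - \<gamma> * \<delta>) *\<^sub>R p - \<delta> *\<^sub>R gradV x) \<le> B"
      using GL id1 by linarith
    define kX where "kX = a*\<gamma>\<^sup>2*(Cb - \<epsilon>/2) - 3/4*c*\<delta>\<^sup>2*\<nu>\<^sup>2"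
    define kP where "kP = a*(c/2 - \<epsilon>*c/2 - \<epsilon>/4) - \<nu>*\<delta>\<^sup>2/2"
    define kW where "kW = a*(\<beta> - \<epsilon>)"
    define kC where "kC = 1 + a - \<epsilon>*a"
    define m where "m = \<epsilon>*a/4"
    have id2: "(1 - \<epsilon> * \<gamma> * \<delta>) * (\<gamma>\<^sup>2/4*X + W + \<gamma>/2*Q + c/2*P + 1) + C1 - B
       = kX*X + kW*W + kP*P + kC + m*(\<gamma>\<^sup>2*X + P - 2*\<gamma>*Q)"
    proof -
      have hz: "P*(c/2 - 1/2 + a/4 - a*c/2) = 0"
      proof -
        have "c/2 - 1/2 + a/4 - a*c/2 = (c*(1-a) - (1 - a/2))/2" by (simp add: field_simps)
        thus ?thesis using hc by simp
      qed
      have "(1 - \<epsilon> * \<gamma> * \<delta>) * (\<gamma>\<^sup>2/4*X + W + \<gamma>/2*Q + c/2*P + 1) + C1 - B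
       - (kX*X + kW*W + kP*P + kC + m*(\<gamma>\<^sup>2*X + P - 2*\<gamma>*Q)) = P*(c/2 - 1/2 + a/4 - a*c/2)"
        unfolding B_def kX_def kP_def kW_def kC_def m_def C1_def a_def by (simp add: field_simps power2_eq_square)
      thus ?thesis using hz by linarith
    qed
    have eps_le: "\<epsilon> \<le> \<beta>" "\<epsilon> \<le> Cb/2" "\<epsilon> \<le> 1/(2*c+1)" unfolding \<epsilon>_def by auto
    have "kX \<ge> 0"
    proof -
      have "a*\<gamma>\<^sup>2*(3/4*Cb) \<le> a*\<gamma>\<^sup>2*(Cb - \<epsilon>/2)" using eps_le(2) a_pos by (intro mult_left_mono) auto
      thus ?thesis unfolding kX_def using key1 by simp
    qed
    moreover have "kP \<ge> 0"
    proof -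
      have "\<epsilon>*(2*c+1) \<le> 1" using eps_le(3) c_ge1 by (simp add: le_divide_eq mult.commute)
      hence "c/2 - \<epsilon>*c/2 - \<epsilon>/4 \<ge> 1/4" using c_ge1 by (simp add: algebra_simps)
      hence "a*(1/4) \<le> a*(c/2 - \<epsilon>*c/2 - \<epsilon>/4)" using a_pos by (intro mult_left_mono) auto
      thus ?thesis unfolding kP_def using key2 by simp
    qed
    moreover have "kW \<ge> 0" unfolding kW_def using eps_le(1) a_pos by simp
    moreover have "kC \<ge> 0"
    proof -
      have "\<epsilon>*a \<le> 1*a" using eps_le(1) beta a_pos by (intro mult_right_mono) auto
      thus ?thesis unfolding kC_def using a_pos by linarith
    qed
    moreover have "m \<ge> 0" unfolding m_def using eps_pos a_pos by simp
    moreover have "X \<ge> 0" "P \<ge> 0" "W \<ge> 0" unfolding X_def P_def W_def using A1a by auto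
    ultimately have "kX*X + kW*W + kP*P + kC + m*(\<gamma>\<^sup>2*X + P - 2*\<gamma>*Q) \<ge> 0"
      using CS by (simp add: add_nonneg_nonneg mult_nonneg_nonneg)
    moreover have "Gamma_c \<gamma> V c x p = \<gamma>\<^sup>2/4*X + W + \<gamma>/2*Q + c/2*P + 1"
      unfolding Gamma_c_def X_def W_def Q_def P_def by simp
    ultimately show ?thesis using LB id2 by (simp add: a_def mult.assoc)
  qed
  show ?thesis
    apply (rule exI[of _ \<epsilon>], rule conjI[OF eps_pos])
    apply (rule exI[of _ C1], rule conjI[OF C1_pos])
    apply (intro allI)
    subgoal for \<xi>0 \<rho>0 \<eta> k
      using core[of "fst (ula \<gamma> \<delta> gradV \<xi>0 \<rho>0 \<eta> k)" "snd (ula \<gamma> \<delta> gradV \<xi>0 \<rho>0 \<eta> k)"]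
      by (simp add: c_def split_beta Let_def)
    done
qed

end
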